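(* For $i=1,2$ let $\delta_i:[0,1]\to[0,1]$ be the diagonal section of some 2-copula such that $t\mapsto\delta_i(t)/t$ is increasing on $(0,1]$ and $t\mapsto\delta_i(t)/t^2$ is decreasing on $(0,1]$, and let $C_i(u_1,u_2)=\min(u_1,u_2)\,\delta_i(\max(u_1,u_2))/\max(u_1,u_2)$ (with $C_i(0,0)=0$) be the corresponding semilinear copulas. If $C_1<_{TD}C_2$, then $C_1\le_{loc}C_2$.
   Context: A 2-copula is a grounded, 2-increasing function $C:[0,1]^2\to[0,1]$ with uniform margins; its diagonal section is $\delta(t)=C(t,t)$. Under the stated monotonicity conditions, the semilinear function $C_i$ is a 2-copula with diagonal $\delta_i$, and it admits the tail dependence function $\Lambda(\boldsymbol w;C_i)=\min(w_1,w_2)\lim_{t\searrow0}\delta_i(t)/t$. In general $\Lambda(\boldsymbol w;C)=\lim_{s\searrow0}C(s\boldsymbol w)/s$. $C_1<_{TD}C_2$ means $\Lambda(\boldsymbol w;C_1)<\Lambda(\boldsymbol w;C_2)$ for all $\boldsymbol w\in(0,\infty)^2$. $C_1\le_{loc}C_2$ means there is $\varepsilon>0$ with $C_1\le C_2$ on $B_\varepsilon(\boldsymbol 0)\cap[0,1]^2$ (Euclidean ball). *)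

theory Defs
  imports "HOL-Analysis.Analysis"
begin

text \<open>A 2-copula, considered as a function on [0,1]^2 (values outside are irrelevant).\<close>
definition copula2 :: "(real \<Rightarrow> real \<Rightarrow> real) \<Rightarrow> bool" where
  "copula2 C \<longleftrightarrow>
     (\<forall>u v. 0 \<le> u \<and> u \<le> 1 \<and> 0 \<le> v \<and> v \<le> 1 \<longrightarrow> 0 \<le> C u v \<and> C u v \<le> 1) \<and>
     (\<forall>u. 0 \<le> u \<and> u \<le> 1 \<longrightarrow> C u 0 = 0 \<and> C 0 u = 0) \<and>
     (\<forall>u. 0 \<le> u \<and> u \<le> 1 \<longrightarrow> C u 1 = u \<and> C 1 u = u) \<and>
     (\<forall>u1 u2 v1 v2. 0 \<le> u1 \<and> u1 \<le> u2 \<and> u2 \<le> 1 \<and> 0 \<le> v1 \<and> v1 \<le> v2 \<and> v2 \<le> 1 \<longrightarrow>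
        C u2 v2 - C u2 v1 - C u1 v2 + C u1 v1 \<ge> 0)"

definition is_copula_diagonal :: "(real \<Rightarrow> real) \<Rightarrow> bool" where
  "is_copula_diagonal \<delta> \<longleftrightarrow> (\<exists>C. copula2 C \<and> (\<forall>t. 0 \<le> t \<and> t \<le> 1 \<longrightarrow> \<delta> t = C t t))"

definition semilinear :: "(real \<Rightarrow> real) \<Rightarrow> real \<Rightarrow> real \<Rightarrow> real" where
  "semilinear \<delta> u v = (if max u v = 0 then 0 else min u v * \<delta> (max u v) / max u v)"

definition has_tdf_value :: "(real \<Rightarrow> real \<Rightarrow> real) \<Rightarrow> real \<Rightarrow> real \<Rightarrow> real \<Rightarrow> bool" where
  "has_tdf_value C w1 w2 L \<longleftrightarrow> ((\<lambda>s. C (s * w1) (s * w2) / s) \<longlongrightarrow> L) (at_right 0)"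

definition td_less :: "(real \<Rightarrow> real \<Rightarrow> real) \<Rightarrow> (real \<Rightarrow> real \<Rightarrow> real) \<Rightarrow> bool" where
  "td_less C1 C2 \<longleftrightarrow> (\<forall>w1 w2. 0 < w1 \<and> 0 < w2 \<longrightarrow>
      (\<exists>L1 L2. has_tdf_value C1 w1 w2 L1 \<and> has_tdf_value C2 w1 w2 L2 \<and> L1 < L2))"

definition loc_le :: "(real \<Rightarrow> real \<Rightarrow> real) \<Rightarrow> (real \<Rightarrow> real \<Rightarrow> real) \<Rightarrow> bool" where
  "loc_le C1 C2 \<longleftrightarrow> (\<exists>\<epsilon>>0. \<forall>u v. 0 \<le> u \<and> u \<le> 1 \<and> 0 \<le> v \<and> v \<le> 1 \<and>
      norm (u, v) < \<epsilon> \<longrightarrow> C1 u v \<le> C2 u v)"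

end

theory Submission
  imports Defs
begin

theorem mainTheorem8:
  fixes \<delta>1 \<delta>2 :: "real \<Rightarrow> real"
  assumes d1: "is_copula_diagonal \<delta>1"
    and d2: "is_copula_diagonal \<delta>2"
    and inc1: "\<forall>s t. 0 < s \<and> s \<le> t \<and> t \<le> 1 \<longrightarrow> \<delta>1 s / s \<le> \<delta>1 t / t"
    and inc2: "\<forall>s t. 0 < s \<and> s \<le> t \<and> t \<le> 1 \<longrightarrow> \<delta>2 s / s \<le> \<delta>2 t / t"
    and dec1: "\<forall>s t. 0 < s \<and> s \<le> t \<and> t \<le> 1 \<longrightarrow> \<delta>1 t / t\<^sup>2 \<le> \<delta>1 s / s\<^sup>2"
    and dec2: "\<forall>s t. 0 < s \<and> s \<le> t \<and> t \<le> 1 \<longrightarrow> \<delta>2 t / t\<^sup>2 \<le> \<delta>2 s / s\<^sup>2"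
    and td: "td_less (semilinear \<delta>1) (semilinear \<delta>2)"
  shows "loc_le (semilinear \<delta>1) (semilinear \<delta>2)"
proof -
  obtain L1 L2 where h1: "has_tdf_value (semilinear \<delta>1) 1 1 L1"
    and h2: "has_tdf_value (semilinear \<delta>2) 1 1 L2" and lt: "L1 < L2"
    using td[unfolded td_less_def, rule_format, of 1 1] by auto
  have eq: "\<forall>\<^sub>F s in at_right 0. semilinear \<delta> (s * 1) (s * 1) / s = \<delta> s / s" for \<delta>
    using eventually_at_right_less[of "0::real"] by eventually_elim (simp add: semilinear_def)
  have t1: "((\<lambda>s. \<delta>1 s / s) \<longlongrightarrow> L1) (at_right 0)"
    using h1 eq[of \<delta>1] unfolding has_tdf_value_def by (rule Lim_transform_eventually)
  have t2: "((\<lambda>s. \<delta>2 s / s) \<longlongrightarrow> L2) (at_right 0)"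
    using h2 eq[of \<delta>2] unfolding has_tdf_value_def by (rule Lim_transform_eventually)
  have "((\<lambda>s. \<delta>2 s / s - \<delta>1 s / s) \<longlongrightarrow> L2 - L1) (at_right 0)"
    using t2 t1 by (rule tendsto_diff)
  hence "\<forall>\<^sub>F s in at_right 0. 0 < \<delta>2 s / s - \<delta>1 s / s"
    using lt by (intro order_tendstoD(1)) auto
  then obtain b where b0: "b > 0" and bb: "\<forall>s. 0 < s \<and> s < b \<longrightarrow> 0 < \<delta>2 s / s - \<delta>1 s / s"
    unfolding eventually_at_right[OF zero_less_one] by auto
  have b: "b > 0" "\<And>s. 0 < s \<Longrightarrow> s < b \<Longrightarrow> \<delta>1 s / s < \<delta>2 s / s"
    using b0 bb by auto
  show ?thesis unfolding loc_le_def
  proof (intro exI[of _ b] conjI allI impI)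
    show "b > 0" by fact
    fix u v :: real
    assume a: "0 \<le> u \<and> u \<le> 1 \<and> 0 \<le> v \<and> v \<le> 1 \<and> norm (u, v) < b"
    show "semilinear \<delta>1 u v \<le> semilinear \<delta>2 u v"
    proof (cases "max u v = 0")
      case True thus ?thesis by (simp add: semilinear_def)
    next
      case False
      have "norm u \<le> norm (u, v)" "norm v \<le> norm (u, v)"
        by (rule norm_fst_le, rule norm_snd_le)
      hence "max u v < b" "max u v > 0" using a False by auto
      hence "\<delta>1 (max u v) / max u v \<le> \<delta>2 (max u v) / max u v"
        using b by (simp add: less_imp_le)
      hence "min u v * (\<delta>1 (max u v) / max u v) \<le> min u v * (\<delta>2 (max u v) / max u v)"
        using a by (intro mult_left_mono) auto
      thus ?thesis using False by (simp add: semilinear_def)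
    qed
  qed
qed

end
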